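(* Let $\mathbf{M}=\{\mathbf{m}^{(1)},\ldots,\mathbf{m}^{(d)}\}$ be a blocking of $\mathcal{A}\in\mathbb{R}^{n_1\times\cdots\times n_d}$ with $\mathbf{m}^{(k)}=[m^{(k)}_1,\ldots,m^{(k)}_{b_k}]$, $\mathbf{b}=(b_1,\ldots,b_d)$. Let $e$ be an integer with $1\le e<d$ and $\mathbf{p}$ a permutation of $1:d$. Define $\mathbf{r}=\mathbf{p}(1:e)$, $\mathbf{c}=\mathbf{p}(e+1:d)$, $\mathbf{R}=\{\mathbf{m}^{(r_1)},\ldots,\mathbf{m}^{(r_e)}\}$, $\mathbf{C}=\{\mathbf{m}^{(c_1)},\ldots,\mathbf{m}^{(c_{d-e})}\}$, $B_{rows}=b_{r_1}\cdots b_{r_e}$, $B_{cols}=b_{c_1}\cdots b_{c_{d-e}}$. Let $P_{\mathbf{R}}$ be the unique permutation matrix with $P_{\mathbf{R}}\mathrm{vec}(\mathcal{X})=\mathrm{vec}_{\mathbf{R}}(\mathcal{X})$ for all $\mathcal{X}\in\mathbb{R}^{n_{r_1}\times\cdots\times n_{r_e}}$, and $P_{\mathbf{C}}$ the unique permutation matrix with $P_{\mathbf{C}}\mathrm{vec}(\mathcal{Y})=\mathrm{vec}_{\mathbf{C}}(\mathcal{Y})$ for all $\mathcal{Y}\in\mathbb{R}^{n_{c_1}\times\cdots\times n_{c_{d-e}}}$. Then the matrix \[ \mathcal{A}_{\mathbf{R}\times\mathbf{C}}=P_{\mathbf{R}}\,\mathcal{A}_{\mathbf{r}\times\mathbf{c}}\,P_{\mathbf{C}}^T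 \] is a $B_{rows}$-by-$B_{cols}$ block matrix (its rows partitioned into consecutive groups, the $\mu$-th group, $\mu=\mathrm{ivec}(\mathbf{i},\mathbf{b}(\mathbf{r}))$, having $m^{(r_1)}_{i_1}\cdots m^{(r_e)}_{i_e}$ rows, and its columns partitioned analogously using $\mathbf{C}$) whose blocks satisfy, for every $\mathbf{1}\le\mathbf{k}\le\mathbf{b}$, \[ (\mathcal{A}_{\mathbf{R}\times\mathbf{C}})_{\mathbf{k}(\mathbf{r}),\mathbf{k}(\mathbf{c})}=(\mathcal{A}_{\mathbf{k}})_{\mathbf{r}\times\mathbf{c}}; \] that is, if $\mu=\mathrm{ivec}(\mathbf{k}(\mathbf{r}),\mathbf{b}(\mathbf{r}))$ and $\tau=\mathrm{ivec}(\mathbf{k}(\mathbf{c}),\mathbf{b}(\mathbf{c}))$, then the $(\mu,\tau)$ block of $\mathcal{A}_{\mathbf{R}\times\mathbf{C}}$ is the $\mathbf{r}\times\mathbf{c}$ unfolding of the $\mathbf{k}$-th block $\mathcal{A}_{\mathbf{k}}$ of $\mathcal{A}$.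
   Context: For an integer vector $\mathbf{v}$ and index vector $\mathbf{s}$, $\mathbf{v}(\mathbf{s})=(v_{s_1},v_{s_2},\ldots)$; inequalities between index vectors are componentwise. For $\mathbf{n}=(n_1,\ldots,n_d)$ and $\mathbf{1}\le\mathbf{i}\le\mathbf{n}$, $\mathrm{ivec}(\mathbf{i},\mathbf{n})=i_1+(i_2-1)n_1+\cdots+(i_d-1)n_1\cdots n_{d-1}$; $\mathrm{vec}(\mathcal{A})$ is the column vector whose entry $\mathrm{ivec}(\mathbf{i},\mathbf{n})$ is $\mathcal{A}(\mathbf{i})$. The $\mathbf{p}$-transpose $\mathcal{A}^{<\mathbf{p}>}\in\mathbb{R}^{n_{p_1}\times\cdots\times n_{p_d}}$ is defined by $\mathcal{A}^{<\mathbf{p}>}(i_{p_1},\ldots,i_{p_d})=\mathcal{A}(i_1,\ldots,i_d)$. The $\mathbf{r}\times\mathbf{c}$ unfolding (with $\mathbf{r}=\mathbf{p}(1:e)$, $\mathbf{c}=\mathbf{p}(e+1:d)$) of a tensor $\mathcal{X}$ of order $d$ with dimension vector $\mathbf{n}$ is the $(n_{r_1}\cdots n_{r_e})\times(n_{c_1}\cdots n_{c_{d-e}})$ matrix $\mathcal{X}_{\mathbf{r}\times\mathbf{c}}$ with $\mathcal{X}_{\mathbf{r}\times\mathbf{c}}(\alpha,\beta)=\mathcal{X}^{<\mathbf{p}>}(i_1,\ldots,i_e,j_1,\ldots,j_{d-e})$ where $\alpha=\mathrm{ivec}(\mathbf{i},\mathbf{n}(\mathbf{r}))$, $\beta=\mathrm{ivec}(\mathbf{j},\mathbf{n}(\mathbf{c}))$.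 A blocking of $\mathcal{A}$ is $\mathbf{M}=\{\mathbf{m}^{(1)},\ldots,\mathbf{m}^{(d)}\}$, each $\mathbf{m}^{(k)}=[m^{(k)}_1,\ldots,m^{(k)}_{b_k}]$ a vector of positive integers summing to $n_k$; with $\ell^{(k)}_j=m^{(k)}_1+\cdots+m^{(k)}_{j-1}+1$, $u^{(k)}_j=m^{(k)}_1+\cdots+m^{(k)}_j$, the block $\mathcal{A}_{\mathbf{k}}$ ($\mathbf{1}\le\mathbf{k}\le\mathbf{b}$) is $\mathcal{A}(\ell^{(1)}_{k_1}:u^{(1)}_{k_1},\ldots,\ell^{(d)}_{k_d}:u^{(d)}_{k_d})$. For a blocking $\mathbf{M}$ with block-count vector $\mathbf{b}$, $\mathrm{vec}_{\mathbf{M}}(\mathcal{A})$ stacks $\mathrm{vec}(\mathcal{A}_{\mathbf{i}})$ for $\mathbf{1}\le\mathbf{i}\le\mathbf{b}$ in order of increasing $\mathrm{ivec}(\mathbf{i},\mathbf{b})$. *)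

theory Defs
  imports "Jordan_Normal_Form.Matrix" "HOL-Combinatorics.Permutations"
begin

(* Conventions: tensor indices, index vectors, ivec values, block numbers and
   permutation entries are 1-based exactly as in the paper.  Matrix / vector
   entries of JNF types are 0-based, so paper entry alpha is JNF entry alpha-1.
   A tensor of order d with dimension vector n (a list) is a function
   nat list => real, of which only arguments i with idx_ok i n matter. *)

type_synonym tensor = "nat list \<Rightarrow> real"

definition sel :: "'a list \<Rightarrow> nat list \<Rightarrow> 'a list" where
  "sel v s = map (\<lambda>k. v ! (k - 1)) s"

definition idx_ok :: "nat list \<Rightarrow> nat list \<Rightarrow> bool" where
  "idx_ok i n \<longleftrightarrow> length i = length n \<and> (\<forall>k<length n. 1 \<le> i ! k \<and> i ! k \<le> n ! k)"

definition ivec :: "nat list \<Rightarrow> nat list \<Rightarrow> nat" where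
  "ivec i n = 1 + (\<Sum>k<length i. (i ! k - 1) * prod_list (take k n))"

definition univec :: "nat \<Rightarrow> nat list \<Rightarrow> nat list" where
  "univec alpha n = (THE i. idx_ok i n \<and> ivec i n = alpha)"

definition tvec :: "nat list \<Rightarrow> tensor \<Rightarrow> real vec" where
  "tvec n A = vec (prod_list n) (\<lambda>a. A (univec (a + 1) n))"

definition ptrans :: "nat list \<Rightarrow> tensor \<Rightarrow> tensor" where
  "ptrans p A = (\<lambda>j. A (THE i. length i = length p \<and> (\<forall>k<length p. i ! (p ! k - 1) = j ! k)))"

definition tunfold :: "nat list \<Rightarrow> nat list \<Rightarrow> nat \<Rightarrow> tensor \<Rightarrow> real mat" where
  "tunfold n p e X =
     (let r = take e p; c = drop e p in
      mat (prod_list (sel n r)) (prod_list (sel n c))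
        (\<lambda>(a, b). ptrans p X (univec (a + 1) (sel n r) @ univec (b + 1) (sel n c))))"

definition is_blocking :: "nat list list \<Rightarrow> nat list \<Rightarrow> bool" where
  "is_blocking M n \<longleftrightarrow> length M = length n \<and>
     (\<forall>k<length n. (\<forall>x\<in>set (M ! k). 0 < x) \<and> sum_list (M ! k) = n ! k)"

definition bcount :: "nat list list \<Rightarrow> nat list" where
  "bcount M = map length M"

definition blockdims :: "nat list list \<Rightarrow> nat list \<Rightarrow> nat list" where
  "blockdims M k = map (\<lambda>t. M ! t ! (k ! t - 1)) [0..<length M]"

(* block A_k = A(l_{k_1}:u_{k_1}, ..., l_{k_d}:u_{k_d}),
   l^{(t)}_j = m^{(t)}_1 + ... + m^{(t)}_{j-1} + 1 *)
definition tblock :: "nat list list \<Rightarrow> tensor \<Rightarrow> nat list \<Rightarrow> tensor" where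
  "tblock M A k = (\<lambda>i. A (map (\<lambda>t. sum_list (take (k ! t - 1) (M ! t)) + i ! t) [0..<length M]))"

definition bvec :: "nat list list \<Rightarrow> tensor \<Rightarrow> real vec" where
  "bvec M A = vec_of_list (concat (map (\<lambda>beta.
      let k = univec (beta + 1) (bcount M) in list_of_vec (tvec (blockdims M k) (tblock M A k)))
      [0..<prod_list (bcount M)]))"

definition perm_mat :: "nat \<Rightarrow> real mat \<Rightarrow> bool" where
  "perm_mat N P \<longleftrightarrow> (\<exists>\<sigma>. \<sigma> permutes {..<N} \<and> P = mat N N (\<lambda>(i, j). if \<sigma> i = j then 1 else 0))"

definition PM :: "nat list list \<Rightarrow> nat list \<Rightarrow> real mat" where
  "PM M n = (THE P. perm_mat (prod_list n) P \<and> (\<forall>X. P *\<^sub>v tvec n X = bvec M X))"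

definition group_sizes :: "nat list list \<Rightarrow> nat list" where
  "group_sizes Ms = map (\<lambda>mu. prod_list (blockdims Ms (univec (mu + 1) (bcount Ms))))
      [0..<prod_list (bcount Ms)]"

definition mblock :: "real mat \<Rightarrow> nat list \<Rightarrow> nat list \<Rightarrow> nat \<Rightarrow> nat \<Rightarrow> real mat" where
  "mblock X rs cs mu tau = mat (rs ! (mu - 1)) (cs ! (tau - 1))
     (\<lambda>(i, j). X $$ (sum_list (take (mu - 1) rs) + i, sum_list (take (tau - 1) cs) + j))"

end

theory Submission
  imports Defs
begin


definition ivec0 :: "nat list \<Rightarrow> nat list \<Rightarrow> nat" where
  "ivec0 i n = (\<Sum>k<length i. (i ! k - 1) * prod_list (take k n))"

lemma ivec_ivec0: "ivec i n = Suc (ivec0 i n)"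
  by (simp add: ivec_def ivec0_def)

lemma ivec0_Nil[simp]: "ivec0 [] n = 0" by (simp add: ivec0_def)

lemma ivec0_Cons[simp]: "ivec0 (x # i) (a # n) = (x - 1) + a * ivec0 i n"
  unfolding ivec0_def length_Cons sum.lessThan_Suc_shift
  by (simp add: sum_distrib_left mult.assoc mult.left_commute)

fun uv0 :: "nat \<Rightarrow> nat list \<Rightarrow> nat list" where
  "uv0 a [] = []"
| "uv0 a (m # n) = (a mod m + 1) # uv0 (a div m) n"

lemma idx_ok_Nil[simp]: "idx_ok i [] \<longleftrightarrow> i = []"
  by (simp add: idx_ok_def)

lemma idx_ok_Cons: "idx_ok i (a # n) \<longleftrightarrow> (\<exists>x j. i = x # j \<and> 1 \<le> x \<and> x \<le> a \<and> idx_ok j n)"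
  apply (cases i)
   apply (simp add: idx_ok_def)
  apply (auto simp add: idx_ok_def nth_Cons split: nat.splits)
  done

lemma idx_ok_Cons2[simp]: "idx_ok (x # i) (a # n) \<longleftrightarrow> 1 \<le> x \<and> x \<le> a \<and> idx_ok i n"
  by (simp add: idx_ok_Cons)

lemma ivec0_lt: "idx_ok i n \<Longrightarrow> ivec0 i n < prod_list n"
proof (induction n arbitrary: i)
  case Nil then show ?case by simp
next
  case (Cons a n)
  then obtain x j where i: "i = x # j" "1 \<le> x" "x \<le> a" "idx_ok j n" by (auto simp: idx_ok_Cons)
  have "ivec0 j n < prod_list n" using Cons i by simp
  then have "Suc (ivec0 j n) \<le> prod_list n" by simp
  then have "a * Suc (ivec0 j n) \<le> a * prod_list n" by (rule mult_le_mono2)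
  then show ?case using i by simp
qed

lemma uv0_ok: "a < prod_list n \<Longrightarrow> idx_ok (uv0 a n) n"
proof (induction n arbitrary: a)
  case Nil then show ?case by simp
next
  case (Cons m n)
  have m: "m > 0" using Cons.prems by (cases m) auto
  have "a div m < prod_list n" using Cons.prems m
    by (simp add: div_less_iff_less_mult mult.commute)
  then show ?case using Cons m by (simp add: Suc_leI)
qed

lemma ivec0_uv0: "a < prod_list n \<Longrightarrow> ivec0 (uv0 a n) n = a"
proof (induction n arbitrary: a)
  case Nil then show ?case by simp
next
  case (Cons m n)
  have m: "m > 0" using Cons.prems by (cases m) auto
  have "a div m < prod_list n" using Cons.prems m
    by (simp add: div_less_iff_less_mult mult.commute)
  then show ?case using Cons m by simp
qed

lemma uv0_ivec0: "idx_ok i n \<Longrightarrow> uv0 (ivec0 i n) n = i"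
proof (induction n arbitrary: i)
  case Nil then show ?case by simp
next
  case (Cons a n)
  then obtain x j where i: "i = x # j" "1 \<le> x" "x \<le> a" "idx_ok j n" by (auto simp: idx_ok_Cons)
  have lt: "x - 1 < a" using i by simp
  have "(x - 1 + a * ivec0 j n) mod a = x - 1" using lt by (metis mod_less mod_mult_self2 mult.commute)
  moreover have "(x - 1 + a * ivec0 j n) div a = ivec0 j n" using lt by simp
  ultimately show ?case using Cons i by simp
qed

lemma univec_uv0: "1 \<le> a \<Longrightarrow> a \<le> prod_list n \<Longrightarrow> univec a n = uv0 (a - 1) n"
  unfolding univec_def
proof (rule the_equality)
  assume "1 \<le> a" "a \<le> prod_list n"
  then show "idx_ok (uv0 (a - 1) n) n \<and> ivec (uv0 (a - 1) n) n = a"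
    by (simp add: uv0_ok ivec0_uv0 ivec_ivec0)
next
  fix i assume "idx_ok i n \<and> ivec i n = a"
  then show "i = uv0 (a - 1) n" by (auto simp: ivec_ivec0 uv0_ivec0)
qed

lemma univec_Suc: "a < prod_list n \<Longrightarrow> univec (Suc a) n = uv0 a n"
  by (simp add: univec_uv0)

lemma ivec0_inj: "idx_ok i n \<Longrightarrow> idx_ok j n \<Longrightarrow> ivec0 i n = ivec0 j n \<Longrightarrow> i = j"
  by (metis uv0_ivec0)

lemma length_uv0[simp]: "length (uv0 a n) = length n"
  by (induction n arbitrary: a) auto



definition pmat :: "nat \<Rightarrow> (nat \<Rightarrow> nat) \<Rightarrow> real mat" where
  "pmat N \<sigma> = mat N N (\<lambda>(i, j). if \<sigma> i = j then 1 else 0)"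

lemma pmat_row:
  assumes "\<sigma> permutes {..<N}" "i < N" "dim_vec v = N"
  shows "row (pmat N \<sigma>) i \<bullet> v = v $ \<sigma> i"
proof -
  have si: "\<sigma> i < N" using assms permutes_in_image by fastforce
  have "row (pmat N \<sigma>) i \<bullet> v = (\<Sum>j\<in>{0..<N}. (if \<sigma> i = j then 1 else 0) * v $ j)"
    using assms unfolding scalar_prod_def pmat_def by (intro sum.cong) auto
  also have "\<dots> = (\<Sum>j\<in>{0..<N}. if \<sigma> i = j then v $ j else 0)" by (intro sum.cong) auto
  also have "\<dots> = v $ \<sigma> i" using si by simp
  finally show ?thesis .
qed

lemma pmat_mult_vec:
  assumes "\<sigma> permutes {..<N}" "i < N" "dim_vec v = N"
  shows "(pmat N \<sigma> *\<^sub>v v) $ i = v $ \<sigma> i"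
  using assms pmat_row by (simp add: pmat_def)

lemma pmat_carrier[simp]: "pmat N \<sigma> \<in> carrier_mat N N"
  by (simp add: pmat_def)

lemma pmat_dims[simp]: "dim_row (pmat N \<sigma>) = N" "dim_col (pmat N \<sigma>) = N"
  by (simp_all add: pmat_def)

lemma pmat_triple:
  assumes s: "\<sigma> permutes {..<N}" and t: "\<tau> permutes {..<K}"
    and U: "U \<in> carrier_mat N K" and i: "i < N" and j: "j < K"
  shows "(pmat N \<sigma> * U * transpose_mat (pmat K \<tau>)) $$ (i, j) = U $$ (\<sigma> i, \<tau> j)"
proof -
  have dU: "dim_row U = N" "dim_col U = K" using U by auto
  have si: "\<sigma> i < N" using s i permutes_in_image by fastforce
  have tj: "\<tau> j < K" using t j permutes_in_image by fastforce
  have PU: "(pmat N \<sigma> * U) $$ (i, b) = U $$ (\<sigma> i, b)" if b: "b < K" for b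
  proof -
    have "(pmat N \<sigma> * U) $$ (i, b) = row (pmat N \<sigma>) i \<bullet> col U b"
      using i b dU by (subst index_mult_mat) auto
    also have "\<dots> = col U b $ \<sigma> i" using pmat_row[OF s i, of "col U b"] dU by simp
    also have "\<dots> = U $$ (\<sigma> i, b)" using si b dU by simp
    finally show ?thesis .
  qed
  have dPU: "dim_row (pmat N \<sigma> * U) = N" "dim_col (pmat N \<sigma> * U) = K" using dU by simp_all
  have "(pmat N \<sigma> * U * transpose_mat (pmat K \<tau>)) $$ (i, j)
      = row (pmat N \<sigma> * U) i \<bullet> col (transpose_mat (pmat K \<tau>)) j"
    using i j dPU by (subst index_mult_mat) auto
  also have "col (transpose_mat (pmat K \<tau>)) j = row (pmat K \<tau>) j"
    using j by (subst col_transpose) auto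
  also have "row (pmat N \<sigma> * U) i \<bullet> row (pmat K \<tau>) j = row (pmat K \<tau>) j \<bullet> row (pmat N \<sigma> * U) i"
  proof (rule comm_scalar_prod[of _ K])
    show "row (pmat N \<sigma> * U) i \<in> carrier_vec K" by (rule carrier_vecI) (simp only: index_row(2) dPU(2))
    show "row (pmat K \<tau>) j \<in> carrier_vec K" by (rule carrier_vecI) (simp only: index_row(2) pmat_dims)
  qed
  also have "\<dots> = row (pmat N \<sigma> * U) i $ \<tau> j"
    using pmat_row[OF t j] dPU by simp
  also have "\<dots> = (pmat N \<sigma> * U) $$ (i, \<tau> j)" using tj i dPU by (subst index_row) auto
  also have "\<dots> = U $$ (\<sigma> i, \<tau> j)" using PU tj by simp
  finally show ?thesis .
qed

fun dec :: "nat list \<Rightarrow> nat \<Rightarrow> nat \<times> nat" where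
  "dec [] q = (0, q)"
| "dec (g # gs) q = (if q < g then (0, q) else (let (b, i) = dec gs (q - g) in (Suc b, i)))"

lemma dec_props:
  "q < sum_list gs \<Longrightarrow> fst (dec gs q) < length gs \<and> snd (dec gs q) < gs ! fst (dec gs q)
     \<and> q = sum_list (take (fst (dec gs q)) gs) + snd (dec gs q)"
proof (induction gs arbitrary: q)
  case Nil then show ?case by simp
next
  case (Cons g gs)
  show ?case
  proof (cases "q < g")
    case True then show ?thesis by simp
  next
    case False
    then have "q - g < sum_list gs" using Cons.prems by simp
    from Cons.IH[OF this] False show ?thesis
      by (auto simp: split_beta)
  qed
qed

lemma dec_inv:
  "b < length gs \<Longrightarrow> i < gs ! b \<Longrightarrow> dec gs (sum_list (take b gs) + i) = (b, i)"
proof (induction gs arbitrary: b)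
  case Nil then show ?case by simp
next
  case (Cons g gs)
  then show ?case by (cases b) auto
qed

lemma dec_bound:
  "b < length gs \<Longrightarrow> i < gs ! b \<Longrightarrow> sum_list (take b gs) + i < sum_list (gs::nat list)"
proof (induction gs arbitrary: b)
  case Nil then show ?case by simp
next
  case (Cons g gs)
  show ?case
  proof (cases b)
    case 0 then show ?thesis using Cons.prems by (simp add: trans_less_add1)
  next
    case (Suc b') then show ?thesis using Cons.IH[of b'] Cons.prems by simp
  qed
qed

lemma concat_nth_offset:
  "b < length L \<Longrightarrow> i < length (L ! b) \<Longrightarrow>
    concat L ! (sum_list (map length (take b L)) + i) = L ! b ! i"
proof (induction L arbitrary: b)
  case Nil then show ?case by simp
next
  case (Cons x L)
  then show ?case by (cases b) (auto simp: nth_append)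
qed

definition pidx :: "nat list \<Rightarrow> nat \<Rightarrow> nat" where
  "pidx p x = (THE k. k < length p \<and> p ! k = x)"

lemma pidx_in: "distinct p \<Longrightarrow> x \<in> set p \<Longrightarrow> pidx p x < length p \<and> p ! pidx p x = x"
  unfolding pidx_def by (rule theI') (rule distinct_Ex1)

lemma pidx_nth: "distinct p \<Longrightarrow> k < length p \<Longrightarrow> pidx p (p ! k) = k"
  unfolding pidx_def by (rule the_equality) (auto simp: nth_eq_iff_index_eq)

lemma length_p:
  assumes "distinct p" "set p = {1..d}" shows "length p = d"
  using assms distinct_card by fastforce

lemma ptrans_eq:
  assumes p: "distinct p" "set p = {1..length p}"
  shows "ptrans p X j = X (map (\<lambda>u. j ! pidx p (Suc u)) [0..<length p])"
proof -
  let ?i = "map (\<lambda>u. j ! pidx p (Suc u)) [0..<length p]"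
  have pk: "p ! k \<ge> 1" "p ! k \<le> length p" if "k < length p" for k
    using p that nth_mem[OF that] by auto
  have P: "length ?i = length p \<and> (\<forall>k<length p. ?i ! (p ! k - 1) = j ! k)"
  proof (intro conjI allI impI)
    fix k assume k: "k < length p"
    have "p ! k - 1 < length p" using pk[OF k] by simp
    then have "?i ! (p ! k - 1) = j ! pidx p (Suc (p ! k - 1))" by simp
    also have "Suc (p ! k - 1) = p ! k" using pk[OF k] by simp
    also have "pidx p (p ! k) = k" using p k by (simp add: pidx_nth)
    finally show "?i ! (p ! k - 1) = j ! k" .
  qed simp
  have "(THE i. length i = length p \<and> (\<forall>k<length p. i ! (p ! k - 1) = j ! k)) = ?i"
  proof (rule the_equality)
    fix i assume H: "length i = length p \<and> (\<forall>k<length p. i ! (p ! k - 1) = j ! k)"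
    show "i = ?i"
    proof (rule nth_equalityI)
      show "length i = length ?i" using H by simp
      fix u assume "u < length i"
      then have u: "u < length p" using H by simp
      then have "Suc u \<in> set p" using p by auto
      then have ix: "pidx p (Suc u) < length p" "p ! pidx p (Suc u) = Suc u"
        using pidx_in p(1) by auto
      have "i ! (p ! pidx p (Suc u) - 1) = j ! pidx p (Suc u)" using H ix by blast
      then show "i ! u = ?i ! u" using ix u by simp
    qed
  qed (rule P)
  then show ?thesis unfolding ptrans_def by simp
qed



definition Gm :: "nat list list \<Rightarrow> nat list \<Rightarrow> nat list \<Rightarrow> nat list" where
  "Gm Ms kk ii = map (\<lambda>t. sum_list (take (kk ! t - 1) (Ms ! t)) + ii ! t) [0..<length Ms]"

lemma tblock_Gm: "tblock Ms X kk ii = X (Gm Ms kk ii)"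
  by (simp add: tblock_def Gm_def)

lemma sum_list_map_upt: "sum_list (map f [0..<N]) = sum f {..<N}"
  by (induction N) auto

lemma sum_take_mono: "a \<le> b \<Longrightarrow> sum_list (take a (m::nat list)) \<le> sum_list (take b m)"
proof -
  assume ab: "a \<le> b"
  have "take b m = take a (take b m) @ drop a (take b m)" by (rule append_take_drop_id[symmetric])
  also have "take a (take b m) = take a m" using ab by (simp add: min_def)
  finally have "sum_list (take b m) = sum_list (take a m) + sum_list (drop a (take b m))"
    by (metis sum_list_append)
  then show ?thesis by simp
qed

lemma sum_take_Suc: "j < length m \<Longrightarrow> sum_list (take (Suc j) (m::nat list)) = sum_list (take j m) + m ! j"
  by (simp add: take_Suc_conv_app_nth)

lemma coord_bound:
  assumes "1 \<le> j" "j \<le> length m" "1 \<le> x" "x \<le> (m::nat list) ! (j - 1)"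
  shows "1 \<le> sum_list (take (j - 1) m) + x \<and> sum_list (take (j - 1) m) + x \<le> sum_list m"
proof -
  have "sum_list (take (j - 1) m) + x \<le> sum_list (take (Suc (j - 1)) m)"
    using assms sum_take_Suc[of "j - 1" m] by simp
  also have "\<dots> \<le> sum_list (take (length m) m)" using assms by (intro sum_take_mono) simp
  finally show ?thesis using assms by simp
qed

lemma coord_inj_aux:
  assumes "1 \<le> j" "j \<le> length m" "1 \<le> x" "x \<le> (m::nat list) ! (j - 1)"
    and "1 \<le> j'" "j' \<le> length m" "1 \<le> x'" "x' \<le> m ! (j' - 1)"
    and "j < j'"
  shows "sum_list (take (j - 1) m) + x < sum_list (take (j' - 1) m) + x'"
proof -
  have "sum_list (take (j - 1) m) + x \<le> sum_list (take (Suc (j - 1)) m)"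
    using assms sum_take_Suc[of "j - 1" m] by simp
  also have "\<dots> \<le> sum_list (take (j' - 1) m)" using assms by (intro sum_take_mono) simp
  finally show ?thesis using assms by simp
qed

lemma coord_inj:
  assumes "1 \<le> j" "j \<le> length m" "1 \<le> x" "x \<le> (m::nat list) ! (j - 1)"
    and "1 \<le> j'" "j' \<le> length m" "1 \<le> x'" "x' \<le> m ! (j' - 1)"
    and eq: "sum_list (take (j - 1) m) + x = sum_list (take (j' - 1) m) + x'"
  shows "j = j' \<and> x = x'"
proof -
  have "\<not> j < j'" using coord_inj_aux[OF assms(1-8)] eq by auto
  moreover have "\<not> j' < j" using coord_inj_aux[OF assms(5-8) assms(1-4)] eq by auto
  ultimately have "j = j'" by simp
  then show ?thesis using eq by simp
qed

lemma length_blockdims[simp]: "length (blockdims Ms kk) = length Ms"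
  by (simp add: blockdims_def)

lemma nth_blockdims[simp]: "t < length Ms \<Longrightarrow> blockdims Ms kk ! t = Ms ! t ! (kk ! t - 1)"
  by (simp add: blockdims_def)

lemma length_bcount[simp]: "length (bcount Ms) = length Ms"
  by (simp add: bcount_def)

lemma nth_bcount[simp]: "t < length Ms \<Longrightarrow> bcount Ms ! t = length (Ms ! t)"
  by (simp add: bcount_def)

lemma length_Gm[simp]: "length (Gm Ms kk ii) = length Ms"
  by (simp add: Gm_def)

lemma Gm_ok:
  assumes B: "is_blocking Ms ns" and k: "idx_ok kk (bcount Ms)" and i: "idx_ok ii (blockdims Ms kk)"
  shows "idx_ok (Gm Ms kk ii) ns"
  unfolding idx_ok_def
proof (intro conjI allI impI)
  show "length (Gm Ms kk ii) = length ns" using B by (simp add: is_blocking_def)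
  fix t assume t: "t < length ns"
  then have tM: "t < length Ms" using B by (simp add: is_blocking_def)
  have kt: "1 \<le> kk ! t" "kk ! t \<le> length (Ms ! t)" using k tM by (auto simp: idx_ok_def)
  have it: "1 \<le> ii ! t" "ii ! t \<le> Ms ! t ! (kk ! t - 1)" using i tM by (auto simp: idx_ok_def)
  have "sum_list (Ms ! t) = ns ! t" using B t by (simp add: is_blocking_def)
  then show "1 \<le> Gm Ms kk ii ! t" "Gm Ms kk ii ! t \<le> ns ! t"
    using coord_bound[OF kt it] tM by (auto simp: Gm_def)
qed

lemma Gm_inj:
  assumes k: "idx_ok kk (bcount Ms)" and i: "idx_ok ii (blockdims Ms kk)"
    and k': "idx_ok kk' (bcount Ms)" and i': "idx_ok ii' (blockdims Ms kk')"
    and eq: "Gm Ms kk ii = Gm Ms kk' ii'"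
  shows "kk = kk' \<and> ii = ii'"
proof -
  have "kk ! t = kk' ! t \<and> ii ! t = ii' ! t" if tM: "t < length Ms" for t
  proof -
    have kt: "1 \<le> kk ! t" "kk ! t \<le> length (Ms ! t)" using k tM by (auto simp: idx_ok_def)
    have it: "1 \<le> ii ! t" "ii ! t \<le> Ms ! t ! (kk ! t - 1)" using i tM by (auto simp: idx_ok_def)
    have kt': "1 \<le> kk' ! t" "kk' ! t \<le> length (Ms ! t)" using k' tM by (auto simp: idx_ok_def)
    have it': "1 \<le> ii' ! t" "ii' ! t \<le> Ms ! t ! (kk' ! t - 1)" using i' tM by (auto simp: idx_ok_def)
    have "Gm Ms kk ii ! t = Gm Ms kk' ii' ! t" using eq by simp
    then have "sum_list (take (kk ! t - 1) (Ms ! t)) + ii ! t = sum_list (take (kk' ! t - 1) (Ms ! t)) + ii' ! t"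
      using tM by (simp add: Gm_def)
    then show ?thesis using coord_inj[OF kt it kt' it'] by simp
  qed
  moreover have "length kk = length Ms" "length kk' = length Ms" "length ii = length Ms" "length ii' = length Ms"
    using k k' i i' by (auto simp: idx_ok_def)
  ultimately show ?thesis by (auto intro: nth_equalityI)
qed

lemma length_group_sizes[simp]: "length (group_sizes Ms) = prod_list (bcount Ms)"
  by (simp add: group_sizes_def)

lemma nth_group_sizes:
  "b < prod_list (bcount Ms) \<Longrightarrow> group_sizes Ms ! b = prod_list (blockdims Ms (uv0 b (bcount Ms)))"
  by (simp add: group_sizes_def univec_Suc)

lemma dim_bvec: "dim_vec (bvec Ms X) = sum_list (group_sizes Ms)"
  unfolding bvec_def group_sizes_def
  by (simp add: length_concat tvec_def comp_def Let_def)

lemma bvec_nth: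
  assumes b: "b < prod_list (bcount Ms)" and i: "i < group_sizes Ms ! b"
  shows "bvec Ms X $ (sum_list (take b (group_sizes Ms)) + i)
       = X (Gm Ms (uv0 b (bcount Ms)) (uv0 i (blockdims Ms (uv0 b (bcount Ms)))))"
proof -
  define N where "N = prod_list (bcount Ms)"
  define F where "F = (\<lambda>beta. let k = univec (beta + 1) (bcount Ms) in list_of_vec (tvec (blockdims Ms k) (tblock Ms X k)))"
  have lenF: "length (F beta) = group_sizes Ms ! beta" if "beta < N" for beta
    using that by (simp add: F_def N_def tvec_def group_sizes_def Let_def)
  have mlen: "map length (take b (map F [0..<N])) = take b (group_sizes Ms)"
  proof (rule nth_equalityI)
    show "length (map length (take b (map F [0..<N]))) = length (take b (group_sizes Ms))"
      by (simp add: N_def)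
    fix t assume "t < length (map length (take b (map F [0..<N])))"
    then have t: "t < b" "t < N" by auto
    then show "map length (take b (map F [0..<N])) ! t = take b (group_sizes Ms) ! t"
      using lenF[of t] by simp
  qed
  have bN: "b < N" using b by (simp add: N_def)
  have "bvec Ms X = vec_of_list (concat (map F [0..<N]))"
    by (simp add: bvec_def F_def N_def)
  then have "bvec Ms X $ (sum_list (take b (group_sizes Ms)) + i)
      = concat (map F [0..<N]) ! (sum_list (map length (take b (map F [0..<N]))) + i)"
    by (simp add: vec_of_list_index mlen)
  also have "\<dots> = F b ! i"
    using concat_nth_offset[of b "map F [0..<N]" i] bN lenF[OF bN] i by simp
  also have "\<dots> = X (Gm Ms (uv0 b (bcount Ms)) (uv0 i (blockdims Ms (uv0 b (bcount Ms)))))"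
    using bN i nth_group_sizes[OF b]
    by (simp add: F_def N_def list_of_vec_index tvec_def univec_Suc tblock_Gm Let_def)
  finally show ?thesis .
qed



lemma sum_uv0: "(\<Sum>beta<prod_list b. f (uv0 beta b)) = (\<Sum>kk\<in>{kk. idx_ok kk b}. f kk)"
  by (rule sum.reindex_bij_witness[of _ "\<lambda>kk. ivec0 kk b" "\<lambda>beta. uv0 beta b"])
     (auto simp: ivec0_uv0 uv0_ok uv0_ivec0 ivec0_lt)

lemma idx_set_Cons: "{kk. idx_ok kk (a # b)} = (\<lambda>(x, kk). x # kk) ` ({1..a} \<times> {kk. idx_ok kk b})"
  by (auto simp: idx_ok_Cons image_iff)

lemma blockdims_Cons: "blockdims (m # Ms) (x # kk) = m ! (x - 1) # blockdims Ms kk"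
  by (rule nth_equalityI) (auto simp: nth_Cons split: nat.splits)

lemma sum_list_nth1: "(\<Sum>x\<in>{1..length m}. m ! (x - 1)) = sum_list (m::nat list)"
proof -
  have "(\<Sum>x\<in>{1..length m}. m ! (x - 1)) = (\<Sum>x\<in>Suc ` {..<length m}. m ! (x - 1))"
    by (simp add: image_Suc_lessThan)
  also have "\<dots> = (\<Sum>x<length m. m ! x)" by (subst sum.reindex) auto
  also have "\<dots> = sum_list m" by (simp add: sum_list_sum_nth atLeast0LessThan)
  finally show ?thesis .
qed

lemma prod_blockdims_sum:
  "(\<Sum>kk\<in>{kk. idx_ok kk (map length Ms)}. prod_list (blockdims Ms kk)) = prod_list (map sum_list Ms)"
proof (induction Ms)
  case Nil then show ?case by (simp add: blockdims_def)
next
  case (Cons m Ms)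
  let ?S = "{kk. idx_ok kk (map length Ms)}"
  have inj: "inj_on (\<lambda>(x, kk). x # kk) ({1..length m} \<times> ?S)"
    by (auto simp: inj_on_def)
  have "(\<Sum>kk\<in>{kk. idx_ok kk (map length (m # Ms))}. prod_list (blockdims (m # Ms) kk))
      = (\<Sum>(x, kk)\<in>{1..length m} \<times> ?S. prod_list (blockdims (m # Ms) (x # kk)))"
    by (simp only: list.map idx_set_Cons sum.reindex[OF inj]) (simp add: case_prod_unfold comp_def)
  also have "\<dots> = (\<Sum>x\<in>{1..length m}. \<Sum>kk\<in>?S. m ! (x - 1) * prod_list (blockdims Ms kk))"
    by (simp add: blockdims_Cons sum.cartesian_product)
  also have "\<dots> = (\<Sum>x\<in>{1..length m}. m ! (x - 1)) * (\<Sum>kk\<in>?S. prod_list (blockdims Ms kk))"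
    by (rule sum_product[symmetric])
  also have "\<dots> = sum_list m * prod_list (map sum_list Ms)"
    using Cons.IH sum_list_nth1[of m] by simp
  finally show ?case by simp
qed

lemma blocking_map_sum: "is_blocking Ms ns \<Longrightarrow> map sum_list Ms = ns"
  by (rule nth_equalityI) (auto simp: is_blocking_def)

lemma sum_group_sizes:
  assumes "is_blocking Ms ns" shows "sum_list (group_sizes Ms) = prod_list ns"
proof -
  have "sum_list (group_sizes Ms) = (\<Sum>beta<prod_list (bcount Ms). prod_list (blockdims Ms (uv0 beta (bcount Ms))))"
    unfolding group_sizes_def sum_list_map_upt by (intro sum.cong) (auto simp: univec_Suc)
  also have "\<dots> = prod_list (map sum_list Ms)"
    by (subst sum_uv0[where f="\<lambda>kk. prod_list (blockdims Ms kk)"]) (simp add: prod_blockdims_sum bcount_def)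
  finally show ?thesis using blocking_map_sum[OF assms] by simp
qed

definition sig :: "nat list list \<Rightarrow> nat list \<Rightarrow> nat \<Rightarrow> nat" where
  "sig Ms ns q = (if q < prod_list ns then
     (let gs = group_sizes Ms; b = fst (dec gs q); i = snd (dec gs q); kk = uv0 b (bcount Ms) in
      ivec0 (Gm Ms kk (uv0 i (blockdims Ms kk))) ns) else q)"

lemma sig_at:
  assumes B: "is_blocking Ms ns" and b: "b < prod_list (bcount Ms)" and i: "i < group_sizes Ms ! b"
  shows "sig Ms ns (sum_list (take b (group_sizes Ms)) + i)
       = ivec0 (Gm Ms (uv0 b (bcount Ms)) (uv0 i (blockdims Ms (uv0 b (bcount Ms))))) ns"
proof -
  have lt: "sum_list (take b (group_sizes Ms)) + i < prod_list ns"
    using dec_bound[of b "group_sizes Ms" i] b i sum_group_sizes[OF B] by simp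
  show ?thesis using lt dec_inv[of b "group_sizes Ms" i] b i by (simp add: sig_def Let_def)
qed

lemma sig_props:
  assumes B: "is_blocking Ms ns" and q: "q < prod_list ns"
  obtains b i where "b < prod_list (bcount Ms)" "i < group_sizes Ms ! b"
    "q = sum_list (take b (group_sizes Ms)) + i"
    "sig Ms ns q = ivec0 (Gm Ms (uv0 b (bcount Ms)) (uv0 i (blockdims Ms (uv0 b (bcount Ms))))) ns"
    "idx_ok (uv0 b (bcount Ms)) (bcount Ms)" "idx_ok (uv0 i (blockdims Ms (uv0 b (bcount Ms)))) (blockdims Ms (uv0 b (bcount Ms)))"
proof -
  let ?gs = "group_sizes Ms"
  have "q < sum_list ?gs" using q sum_group_sizes[OF B] by simp
  from dec_props[OF this] have D: "fst (dec ?gs q) < prod_list (bcount Ms)" "snd (dec ?gs q) < ?gs ! fst (dec ?gs q)"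
     "q = sum_list (take (fst (dec ?gs q)) ?gs) + snd (dec ?gs q)" by auto
  show ?thesis
    apply (rule that[OF D])
    using D sig_at[OF B D(1,2)] apply simp
    using D(1) apply (rule uv0_ok)
    apply (rule uv0_ok)
    using D nth_group_sizes by simp
qed

lemma sig_permutes:
  assumes B: "is_blocking Ms ns" shows "sig Ms ns permutes {..<prod_list ns}"
proof -
  let ?N = "prod_list ns"
  have into: "sig Ms ns q \<in> {..<?N}" if "q < ?N" for q
    using sig_props[OF B that] by (metis Gm_ok[OF B] ivec0_lt lessThan_iff)
  have inj: "inj_on (sig Ms ns) {..<?N}"
  proof (rule inj_onI)
    fix q q' assume q: "q \<in> {..<?N}" and q': "q' \<in> {..<?N}" and eq: "sig Ms ns q = sig Ms ns q'"
    obtain b i where bi: "b < prod_list (bcount Ms)" "i < group_sizes Ms ! b"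
      "q = sum_list (take b (group_sizes Ms)) + i"
      "sig Ms ns q = ivec0 (Gm Ms (uv0 b (bcount Ms)) (uv0 i (blockdims Ms (uv0 b (bcount Ms))))) ns"
      "idx_ok (uv0 b (bcount Ms)) (bcount Ms)" "idx_ok (uv0 i (blockdims Ms (uv0 b (bcount Ms)))) (blockdims Ms (uv0 b (bcount Ms)))"
      using sig_props[OF B] q by blast
    obtain b' i' where bi': "b' < prod_list (bcount Ms)" "i' < group_sizes Ms ! b'"
      "q' = sum_list (take b' (group_sizes Ms)) + i'"
      "sig Ms ns q' = ivec0 (Gm Ms (uv0 b' (bcount Ms)) (uv0 i' (blockdims Ms (uv0 b' (bcount Ms))))) ns"
      "idx_ok (uv0 b' (bcount Ms)) (bcount Ms)" "idx_ok (uv0 i' (blockdims Ms (uv0 b' (bcount Ms)))) (blockdims Ms (uv0 b' (bcount Ms)))"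
      using sig_props[OF B] q' by blast
    have "Gm Ms (uv0 b (bcount Ms)) (uv0 i (blockdims Ms (uv0 b (bcount Ms))))
        = Gm Ms (uv0 b' (bcount Ms)) (uv0 i' (blockdims Ms (uv0 b' (bcount Ms))))"
      using ivec0_inj[OF Gm_ok[OF B bi(5,6)] Gm_ok[OF B bi'(5,6)]] eq bi(4) bi'(4) by simp
    from Gm_inj[OF bi(5,6) bi'(5,6) this]
    have e1: "uv0 b (bcount Ms) = uv0 b' (bcount Ms)"
      and e2: "uv0 i (blockdims Ms (uv0 b (bcount Ms))) = uv0 i' (blockdims Ms (uv0 b' (bcount Ms)))" by auto
    have bb: "b = b'" using e1 ivec0_uv0 bi(1) bi'(1) by metis
    have "i < prod_list (blockdims Ms (uv0 b (bcount Ms)))" "i' < prod_list (blockdims Ms (uv0 b (bcount Ms)))"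
      using bi bi' bb nth_group_sizes by auto
    then have "i = i'" using e2 bb ivec0_uv0 by metis
    then show "q = q'" using bb bi(3) bi'(3) by simp
  qed
  have img: "sig Ms ns ` {..<?N} = {..<?N}"
    by (rule endo_inj_surj) (use into inj in auto)
  have "bij_betw (sig Ms ns) {..<?N} {..<?N}" using inj img by (simp add: bij_betw_def)
  moreover have "\<forall>x. x \<notin> {..<?N} \<longrightarrow> sig Ms ns x = x" by (simp add: sig_def)
  ultimately show ?thesis by (intro bij_imp_permutes) auto
qed

lemma pmat_sig_works:
  assumes B: "is_blocking Ms ns"
  shows "pmat (prod_list ns) (sig Ms ns) *\<^sub>v tvec ns X = bvec Ms X"
proof (rule eq_vecI)
  show "dim_vec (pmat (prod_list ns) (sig Ms ns) *\<^sub>v tvec ns X) = dim_vec (bvec Ms X)"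
    using sum_group_sizes[OF B] by (simp add: dim_bvec pmat_def)
  fix q assume "q < dim_vec (bvec Ms X)"
  then have q: "q < prod_list ns" using sum_group_sizes[OF B] by (simp add: dim_bvec)
  obtain b i where bi: "b < prod_list (bcount Ms)" "i < group_sizes Ms ! b"
      "q = sum_list (take b (group_sizes Ms)) + i"
      "sig Ms ns q = ivec0 (Gm Ms (uv0 b (bcount Ms)) (uv0 i (blockdims Ms (uv0 b (bcount Ms))))) ns"
      "idx_ok (uv0 b (bcount Ms)) (bcount Ms)" "idx_ok (uv0 i (blockdims Ms (uv0 b (bcount Ms)))) (blockdims Ms (uv0 b (bcount Ms)))"
      using sig_props[OF B q] by blast
  have ok: "idx_ok (Gm Ms (uv0 b (bcount Ms)) (uv0 i (blockdims Ms (uv0 b (bcount Ms))))) ns"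
    using Gm_ok[OF B bi(5,6)] .
  have sq: "sig Ms ns q < prod_list ns" using bi(4) ivec0_lt[OF ok] by simp
  have "(pmat (prod_list ns) (sig Ms ns) *\<^sub>v tvec ns X) $ q = tvec ns X $ sig Ms ns q"
    using pmat_mult_vec[OF sig_permutes[OF B] q] by (simp add: tvec_def)
  also have "\<dots> = X (Gm Ms (uv0 b (bcount Ms)) (uv0 i (blockdims Ms (uv0 b (bcount Ms)))))"
    using sq bi(4) by (simp add: tvec_def univec_Suc uv0_ivec0[OF ok])
  also have "\<dots> = bvec Ms X $ q" using bvec_nth[OF bi(1,2)] bi(3) by simp
  finally show "(pmat (prod_list ns) (sig Ms ns) *\<^sub>v tvec ns X) $ q = bvec Ms X $ q" .
qed

lemma PM_eq:
  assumes B: "is_blocking Ms ns"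
  shows "PM Ms ns = pmat (prod_list ns) (sig Ms ns)"
  unfolding PM_def
proof (rule the_equality)
  show "perm_mat (prod_list ns) (pmat (prod_list ns) (sig Ms ns)) \<and>
      (\<forall>X. pmat (prod_list ns) (sig Ms ns) *\<^sub>v tvec ns X = bvec Ms X)"
    using sig_permutes[OF B] pmat_sig_works[OF B] by (auto simp: perm_mat_def pmat_def)
next
  fix P assume H: "perm_mat (prod_list ns) P \<and> (\<forall>X. P *\<^sub>v tvec ns X = bvec Ms X)"
  let ?N = "prod_list ns"
  obtain \<tau> where t: "\<tau> permutes {..<?N}" and P: "P = pmat ?N \<tau>"
    using H by (auto simp: perm_mat_def pmat_def)
  define X where "X = (\<lambda>i. real (ivec0 i ns))"
  have tv: "tvec ns X $ a = real a" if "a < ?N" for a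
    using that by (simp add: tvec_def X_def univec_Suc ivec0_uv0)
  have "\<tau> q = sig Ms ns q" if q: "q < ?N" for q
  proof -
    have tq: "\<tau> q < ?N" using t q permutes_in_image by fastforce
    have sq: "sig Ms ns q < ?N" using sig_permutes[OF B] q permutes_in_image by fastforce
    have "real (\<tau> q) = (P *\<^sub>v tvec ns X) $ q"
      using pmat_mult_vec[OF t q] tv[OF tq] P by (simp add: tvec_def)
    also have "\<dots> = (pmat ?N (sig Ms ns) *\<^sub>v tvec ns X) $ q"
      using H pmat_sig_works[OF B] by simp
    also have "\<dots> = real (sig Ms ns q)"
      using pmat_mult_vec[OF sig_permutes[OF B] q] tv[OF sq] by (simp add: tvec_def)
    finally show ?thesis by simp
  qed
  moreover have "\<tau> q = sig Ms ns q" if "q \<notin> {..<?N}" for q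
    using that t sig_permutes[OF B] by (simp add: permutes_def)
  ultimately have "\<tau> = sig Ms ns" by (metis lessThan_iff ext)
  then show "P = pmat ?N (sig Ms ns)" using P by simp
qed



lemma length_sel[simp]: "length (sel v s) = length s" by (simp add: sel_def)
lemma nth_sel[simp]: "t < length s \<Longrightarrow> sel v s ! t = v ! (s ! t - 1)" by (simp add: sel_def)

lemma blocking_sel:
  assumes B: "is_blocking M n" and s: "\<forall>x\<in>set s. 1 \<le> x \<and> x \<le> length n"
  shows "is_blocking (sel M s) (sel n s)"
  unfolding is_blocking_def
proof (intro conjI allI impI)
  show "length (sel M s) = length (sel n s)" by simp
  fix t assume t: "t < length (sel n s)"
  then have "s ! t \<in> set s" by simp
  then have st: "s ! t - 1 < length n" using s by fastforce
  show "\<forall>x\<in>set (sel M s ! t). 0 < x" "sum_list (sel M s ! t) = sel n s ! t"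
    using B st t by (auto simp: is_blocking_def)
qed

lemma bcount_sel:
  "bcount (sel M s) = sel (bcount M) s" if "\<forall>x\<in>set s. 1 \<le> x \<and> x \<le> length M"
proof (rule nth_equalityI)
  fix t assume t: "t < length (bcount (sel M s))"
  then have "s ! t \<in> set s" by simp
  then have "s ! t - 1 < length M" using that by fastforce
  then show "bcount (sel M s) ! t = sel (bcount M) s ! t" using t by simp
qed simp

lemma blockdims_sel:
  "blockdims (sel M s) (sel k s) = sel (blockdims M k) s" if "\<forall>x\<in>set s. 1 \<le> x \<and> x \<le> length M"
proof (rule nth_equalityI)
  fix t assume t: "t < length (blockdims (sel M s) (sel k s))"
  then have "s ! t \<in> set s" by simp
  then have "s ! t - 1 < length M" using that by fastforce
  then show "blockdims (sel M s) (sel k s) ! t = sel (blockdims M k) s ! t" using t by simp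
qed simp

lemma idx_ok_sel:
  assumes "idx_ok k b" "\<forall>x\<in>set s. 1 \<le> x \<and> x \<le> length b"
  shows "idx_ok (sel k s) (sel b s)"
  unfolding idx_ok_def
proof (intro conjI allI impI)
  show "length (sel k s) = length (sel b s)" by simp
  fix t assume t: "t < length (sel b s)"
  then have "s ! t \<in> set s" by simp
  then have "s ! t - 1 < length b" using assms by fastforce
  then show "1 \<le> sel k s ! t" "sel k s ! t \<le> sel b s ! t" using t assms(1) by (auto simp: idx_ok_def)
qed

lemma Gm_sel:
  "Gm (sel M s) (sel k s) I = map (\<lambda>t. sum_list (take (k ! (s ! t - 1) - 1) (M ! (s ! t - 1))) + I ! t) [0..<length s]"
  by (simp add: Gm_def)

theorem theorem3p3:
  fixes n :: "nat list" and M :: "nat list list" and A :: tensor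
    and e :: nat and p :: "nat list"
  assumes blocking: "is_blocking M n"
    and e_pos: "1 \<le> e" and e_lt: "e < length n"
    and p_perm: "distinct p" "set p = {1..length n}"
  defines "r \<equiv> take e p" and "c \<equiv> drop e p"
  defines "R \<equiv> sel M r" and "C \<equiv> sel M c"
  defines "ARC \<equiv> PM R (sel n r) * tunfold n p e A * transpose_mat (PM C (sel n c))"
  shows "ARC \<in> carrier_mat (sum_list (group_sizes R)) (sum_list (group_sizes C))
    \<and> length (group_sizes R) = prod_list (sel (bcount M) r)
    \<and> length (group_sizes C) = prod_list (sel (bcount M) c)
    \<and> (\<forall>k. idx_ok k (bcount M) \<longrightarrow>
          mblock ARC (group_sizes R) (group_sizes C)
                 (ivec (sel k r) (sel (bcount M) r)) (ivec (sel k c) (sel (bcount M) c))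
          = tunfold (blockdims M k) p e (tblock M A k))"
proof -
  define d where "d = length n"
  have lp: "length p = d" using length_p[OF p_perm] d_def by simp
  have lM: "length M = d" using blocking by (simp add: is_blocking_def d_def)
  have lr: "length r = e" using lp e_lt d_def by (simp add: r_def)
  have lc: "length c = d - e" using lp by (simp add: c_def)
  have rs: "\<forall>x\<in>set r. 1 \<le> x \<and> x \<le> length n" using p_perm unfolding r_def
    by (auto dest: in_set_takeD)
  have cs: "\<forall>x\<in>set c. 1 \<le> x \<and> x \<le> length n" using p_perm unfolding c_def
    by (auto dest: in_set_dropD)
  have rsM: "\<forall>x\<in>set r. 1 \<le> x \<and> x \<le> length M" using rs lM d_def by simp
  have csM: "\<forall>x\<in>set c. 1 \<le> x \<and> x \<le> length M" using cs lM d_def by simp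
  have BR: "is_blocking R (sel n r)" unfolding R_def by (rule blocking_sel[OF blocking rs])
  have BC: "is_blocking C (sel n c)" unfolding C_def by (rule blocking_sel[OF blocking cs])
  define Nr where "Nr = prod_list (sel n r)"
  define Nc where "Nc = prod_list (sel n c)"
  define U where "U = tunfold n p e A"
  have U: "U \<in> carrier_mat Nr Nc" by (simp add: U_def tunfold_def Nr_def Nc_def r_def c_def Let_def)
  have sR: "sig R (sel n r) permutes {..<Nr}" using sig_permutes[OF BR] by (simp add: Nr_def)
  have sC: "sig C (sel n c) permutes {..<Nc}" using sig_permutes[OF BC] by (simp add: Nc_def)
  have ARC: "ARC = pmat Nr (sig R (sel n r)) * U * transpose_mat (pmat Nc (sig C (sel n c)))"
    by (simp add: ARC_def PM_eq[OF BR] PM_eq[OF BC] Nr_def Nc_def U_def)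
  have gR: "sum_list (group_sizes R) = Nr" using sum_group_sizes[OF BR] by (simp add: Nr_def)
  have gC: "sum_list (group_sizes C) = Nc" using sum_group_sizes[OF BC] by (simp add: Nc_def)
  have tC: "transpose_mat (pmat Nc (sig C (sel n c))) \<in> carrier_mat Nc Nc" by (simp add: pmat_def)
  have carr: "ARC \<in> carrier_mat Nr Nc" unfolding ARC
    by (rule mult_carrier_mat[OF mult_carrier_mat[OF pmat_carrier U] tC])
  have bR: "bcount R = sel (bcount M) r" unfolding R_def by (rule bcount_sel[OF rsM])
  have bC: "bcount C = sel (bcount M) c" unfolding C_def by (rule bcount_sel[OF csM])
  have main: "mblock ARC (group_sizes R) (group_sizes C)
                 (ivec (sel k r) (sel (bcount M) r)) (ivec (sel k c) (sel (bcount M) c))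
          = tunfold (blockdims M k) p e (tblock M A k)" if k: "idx_ok k (bcount M)" for k
  proof -
    define bd where "bd = blockdims M k"
    define kr where "kr = sel k r"
    define kc where "kc = sel k c"
    define mu where "mu = ivec0 kr (bcount R)"
    define ta where "ta = ivec0 kc (bcount C)"
    have bM: "length (bcount M) = length n" using lM d_def by simp
    have okr: "idx_ok kr (bcount R)" using idx_ok_sel[OF k] rs bM bR by (simp add: kr_def)
    have okc: "idx_ok kc (bcount C)" using idx_ok_sel[OF k] cs bM bC by (simp add: kc_def)
    have mu_lt: "mu < prod_list (bcount R)" using ivec0_lt[OF okr] by (simp add: mu_def)
    have ta_lt: "ta < prod_list (bcount C)" using ivec0_lt[OF okc] by (simp add: ta_def)
    have umu: "uv0 mu (bcount R) = kr" using uv0_ivec0[OF okr] by (simp add: mu_def)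
    have uta: "uv0 ta (bcount C) = kc" using uv0_ivec0[OF okc] by (simp add: ta_def)
    have bdr: "blockdims R kr = sel bd r" unfolding R_def kr_def bd_def by (rule blockdims_sel[OF rsM])
    have bdc: "blockdims C kc = sel bd c" unfolding C_def kc_def bd_def by (rule blockdims_sel[OF csM])
    have gmu: "group_sizes R ! mu = prod_list (sel bd r)" using nth_group_sizes[OF mu_lt] umu bdr by simp
    have gta: "group_sizes C ! ta = prod_list (sel bd c)" using nth_group_sizes[OF ta_lt] uta bdc by simp
    have iv: "ivec (sel k r) (sel (bcount M) r) = Suc mu" "ivec (sel k c) (sel (bcount M) c) = Suc ta"
      by (simp_all add: ivec_ivec0 mu_def ta_def kr_def kc_def bR bC)
    define oR where "oR = sum_list (take mu (group_sizes R))"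
    define oC where "oC = sum_list (take ta (group_sizes C))"
    define off where "off = (\<lambda>u. sum_list (take (k ! u - 1) (M ! u)))"
    have entry: "ARC $$ (oR + i, oC + j) = ptrans p (tblock M A k) (uv0 i (sel bd r) @ uv0 j (sel bd c))"
      if i: "i < prod_list (sel bd r)" and j: "j < prod_list (sel bd c)" for i j
    proof -
      define I where "I = uv0 i (sel bd r)"
      define J where "J = uv0 j (sel bd c)"
      have lI: "length I = e" using lr by (simp add: I_def)
      have lJ: "length J = d - e" using lc by (simp add: J_def)
      have iR: "oR + i < Nr" using dec_bound[of mu "group_sizes R" i] mu_lt i gmu gR by (simp add: oR_def)
      have jC: "oC + j < Nc" using dec_bound[of ta "group_sizes C" j] ta_lt j gta gC by (simp add: oC_def)
      have sigR: "sig R (sel n r) (oR + i) = ivec0 (Gm R kr I) (sel n r)"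
        using sig_at[OF BR mu_lt, of i] i gmu umu bdr by (simp add: oR_def I_def)
      have sigC: "sig C (sel n c) (oC + j) = ivec0 (Gm C kc J) (sel n c)"
        using sig_at[OF BC ta_lt, of j] j gta uta bdc by (simp add: oC_def J_def)
      have okI: "idx_ok I (blockdims R kr)" using uv0_ok[OF i] bdr by (simp add: I_def)
      have okJ: "idx_ok J (blockdims C kc)" using uv0_ok[OF j] bdc by (simp add: J_def)
      have GR: "idx_ok (Gm R kr I) (sel n r)" by (rule Gm_ok[OF BR okr okI])
      have GC: "idx_ok (Gm C kc J) (sel n c)" by (rule Gm_ok[OF BC okc okJ])
      have "ARC $$ (oR + i, oC + j) = U $$ (sig R (sel n r) (oR + i), sig C (sel n c) (oC + j))"
        unfolding ARC by (rule pmat_triple[OF sR sC U iR jC])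
      also have "\<dots> = ptrans p A (Gm R kr I @ Gm C kc J)"
      proof -
        have a: "ivec0 (Gm R kr I) (sel n r) < Nr" using ivec0_lt[OF GR] by (simp add: Nr_def)
        have b: "ivec0 (Gm C kc J) (sel n c) < Nc" using ivec0_lt[OF GC] by (simp add: Nc_def)
        show ?thesis unfolding sigR sigC U_def tunfold_def Let_def
          using a b GR GC
          by (simp add: Nr_def Nc_def r_def[symmetric] c_def[symmetric] univec_Suc uv0_ivec0)
      qed
      also have "Gm R kr I @ Gm C kc J = map (\<lambda>s. off (p ! s - 1) + (I @ J) ! s) [0..<d]"
      proof (rule nth_equalityI)
        show "length (Gm R kr I @ Gm C kc J) = length (map (\<lambda>s. off (p ! s - 1) + (I @ J) ! s) [0..<d])"
          using lr lc e_lt d_def by (simp add: R_def C_def Gm_def)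
        fix s assume "s < length (Gm R kr I @ Gm C kc J)"
        then have s: "s < d" using lr lc e_lt d_def by (simp add: R_def C_def Gm_def)
        show "(Gm R kr I @ Gm C kc J) ! s = map (\<lambda>s. off (p ! s - 1) + (I @ J) ! s) [0..<d] ! s"
        proof (cases "s < e")
          case True then show ?thesis using s lr lI lp
            by (simp add: R_def kr_def Gm_sel nth_append off_def r_def)
        next
          case False then show ?thesis using s lr lc lI lJ lp e_lt d_def
            by (simp add: C_def kc_def Gm_sel nth_append off_def c_def R_def Gm_def)
        qed
      qed
      also have "ptrans p A (map (\<lambda>s. off (p ! s - 1) + (I @ J) ! s) [0..<d])
          = A (map (\<lambda>u. off u + (I @ J) ! pidx p (Suc u)) [0..<d])"
      proof -
        have pd: "set p = {1..length p}" using p_perm lp d_def by simp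
        have "map (\<lambda>u. map (\<lambda>s. off (p ! s - 1) + (I @ J) ! s) [0..<d] ! pidx p (Suc u)) [0..<length p]
            = map (\<lambda>u. off u + (I @ J) ! pidx p (Suc u)) [0..<d]"
        proof (rule map_cong)
          show "[0..<length p] = [0..<d]" using lp by simp
          fix u assume "u \<in> set [0..<d]"
          then have "Suc u \<in> set p" using p_perm d_def by auto
          then have "pidx p (Suc u) < length p \<and> p ! pidx p (Suc u) = Suc u" using pidx_in p_perm(1) by blast
          then show "map (\<lambda>s. off (p ! s - 1) + (I @ J) ! s) [0..<d] ! pidx p (Suc u) = off u + (I @ J) ! pidx p (Suc u)"
            using lp by simp
        qed
        then show ?thesis using ptrans_eq[OF p_perm(1) pd] by simp
      qed
      also have "\<dots> = ptrans p (tblock M A k) (I @ J)"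
      proof -
        have pd: "set p = {1..length p}" using p_perm lp d_def by simp
        show ?thesis using ptrans_eq[OF p_perm(1) pd] lp lM
          apply (simp add: tblock_def off_def)
          apply (rule arg_cong[where f=A])
          apply (rule map_cong)
           apply auto
          done
      qed
      finally show ?thesis by (simp add: I_def J_def)
    qed
    show ?thesis
    proof (rule eq_matI)
      show "dim_row (mblock ARC (group_sizes R) (group_sizes C) (ivec (sel k r) (sel (bcount M) r)) (ivec (sel k c) (sel (bcount M) c)))
          = dim_row (tunfold (blockdims M k) p e (tblock M A k))"
        using gmu by (simp add: iv mblock_def tunfold_def Let_def bd_def r_def[symmetric] c_def[symmetric])
      show "dim_col (mblock ARC (group_sizes R) (group_sizes C) (ivec (sel k r) (sel (bcount M) r)) (ivec (sel k c) (sel (bcount M) c)))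
          = dim_col (tunfold (blockdims M k) p e (tblock M A k))"
        using gta by (simp add: iv mblock_def tunfold_def Let_def bd_def r_def[symmetric] c_def[symmetric])
      fix i j assume i: "i < dim_row (tunfold (blockdims M k) p e (tblock M A k))"
        and j: "j < dim_col (tunfold (blockdims M k) p e (tblock M A k))"
      have i': "i < prod_list (sel bd r)" using i by (simp add: tunfold_def Let_def bd_def r_def[symmetric])
      have j': "j < prod_list (sel bd c)" using j by (simp add: tunfold_def Let_def bd_def c_def[symmetric])
      show "mblock ARC (group_sizes R) (group_sizes C) (ivec (sel k r) (sel (bcount M) r)) (ivec (sel k c) (sel (bcount M) c)) $$ (i, j)
          = tunfold (blockdims M k) p e (tblock M A k) $$ (i, j)"
        using i' j' gmu gta entry[OF i' j']
        by (simp add: iv mblock_def tunfold_def Let_def bd_def r_def[symmetric] c_def[symmetric] univec_Suc oR_def oC_def)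
    qed
  qed
  show ?thesis
    using carr gR gC main bR bC by simp
qed

end
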